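(* Let $X,Y$ be metric spaces and let $X\times Y$ carry a metric for which both projections $\mathrm{pr}_1:X\times Y\to X$ and $\mathrm{pr}_2:X\times Y\to Y$ are 1-Lipschitz. For any two Borel probability measures $\pi,\pi'$ on $X\times Y$, \[ |d_{\mathrm{conc}}^{\pi}(X,Y)-d_{\mathrm{conc}}^{\pi'}(X,Y)|\le 2\,d_{\mathrm P}(\pi,\pi'). \]
   Context: $\mathcal{L}ip_1(X)$ is the set of 1-Lipschitz functions $X\to\mathbb R$, and $\mathrm{pr}_1^*\mathcal{L}ip_1(X):=\{f\circ\mathrm{pr}_1:f\in\mathcal{L}ip_1(X)\}$ (similarly for $Y$). For a Borel probability measure $\pi$ on $X\times Y$ and measurable $F,G:X\times Y\to\mathbb R$, $d_{\mathrm{KF}}^\pi(F,G):=\inf\{\varepsilon\ge0:\pi(\{|F-G|>\varepsilon\})\le\varepsilon\}$, and $d_{\mathrm{conc}}^{\pi}(X,Y):=d_{\mathrm H}^{d_{\mathrm{KF}}^\pi}(\mathrm{pr}_1^*\mathcal{L}ip_1(X),\mathrm{pr}_2^*\mathcal{L}ip_1(Y))$, the Hausdorff distance with respect to $d_{\mathrm{KF}}^\pi$. $d_{\mathrm P}$ is the Prohorov metric on Borel probability measures on $X\times Y$. *)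

theory Defs
  imports "HOL-Analysis.Analysis" "HOL-Probability.Probability"
begin

definition mborel :: "'a set \<Rightarrow> ('a \<Rightarrow> 'a \<Rightarrow> real) \<Rightarrow> 'a set set" where
  "mborel M d = sigma_sets M {U. openin (Metric_space.mtopology M d) U}"

definition borel_prob_measure :: "'a set \<Rightarrow> ('a \<Rightarrow> 'a \<Rightarrow> real) \<Rightarrow> 'a measure \<Rightarrow> bool" where
  "borel_prob_measure M d \<pi> \<longleftrightarrow> prob_space \<pi> \<and> space \<pi> = M \<and> sets \<pi> = mborel M d"

definition Lip1 :: "'a set \<Rightarrow> ('a \<Rightarrow> 'a \<Rightarrow> real) \<Rightarrow> ('a \<Rightarrow> real) set" where
  "Lip1 M d = {f. \<forall>x\<in>M. \<forall>y\<in>M. \<bar>f x - f y\<bar> \<le> d x y}"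

definition dKF :: "'a measure \<Rightarrow> ('a \<Rightarrow> real) \<Rightarrow> ('a \<Rightarrow> real) \<Rightarrow> real" where
  "dKF \<pi> F G = Inf {\<epsilon>. \<epsilon> \<ge> 0 \<and> measure \<pi> {z \<in> space \<pi>. \<bar>F z - G z\<bar> > \<epsilon>} \<le> \<epsilon>}"

definition hausdorff_dist :: "('b \<Rightarrow> 'b \<Rightarrow> real) \<Rightarrow> 'b set \<Rightarrow> 'b set \<Rightarrow> real" where
  "hausdorff_dist dd A B =
     max (SUP a\<in>A. INF b\<in>B. dd a b) (SUP b\<in>B. INF a\<in>A. dd a b)"

definition dconc :: "('a \<times> 'b) measure \<Rightarrow> 'a set \<Rightarrow> ('a \<Rightarrow> 'a \<Rightarrow> real)
    \<Rightarrow> 'b set \<Rightarrow> ('b \<Rightarrow> 'b \<Rightarrow> real) \<Rightarrow> real" where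
  "dconc \<pi> X dX Y dY = hausdorff_dist (dKF \<pi>)
      ((\<lambda>f. f \<circ> fst) ` Lip1 X dX) ((\<lambda>g. g \<circ> snd) ` Lip1 Y dY)"

definition open_nbhd :: "'a set \<Rightarrow> ('a \<Rightarrow> 'a \<Rightarrow> real) \<Rightarrow> real \<Rightarrow> 'a set \<Rightarrow> 'a set" where
  "open_nbhd M d \<epsilon> A = {z \<in> M. \<exists>a\<in>A. d z a < \<epsilon>}"

definition prohorov :: "'a set \<Rightarrow> ('a \<Rightarrow> 'a \<Rightarrow> real) \<Rightarrow> 'a measure \<Rightarrow> 'a measure \<Rightarrow> real" where
  "prohorov M d \<mu> \<nu> = Inf {\<epsilon>. \<epsilon> > 0 \<and> (\<forall>A \<in> mborel M d.
       measure \<mu> A \<le> measure \<nu> (open_nbhd M d \<epsilon> A) + \<epsilon> \<and>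
       measure \<nu> A \<le> measure \<mu> (open_nbhd M d \<epsilon> A) + \<epsilon>)}"

end

theory Submission
  imports Defs
begin

lemma superlevel_mborel:
  fixes H :: "'c \<Rightarrow> real"
  assumes MS: "Metric_space M d"
    and Hl: "\<forall>z\<in>M. \<forall>a\<in>M. \<bar>H z - H a\<bar> \<le> 2 * d z a"
  shows "{z \<in> M. \<bar>H z\<bar> > c} \<in> mborel M d"
proof -
  interpret Metric_space M d by (rule MS)
  have "openin mtopology {z \<in> M. \<bar>H z\<bar> > c}"
    unfolding openin_mtopology
  proof (intro conjI allI impI)
    fix x assume x: "x \<in> {z \<in> M. \<bar>H z\<bar> > c}"
    show "\<exists>r>0. mball x r \<subseteq> {z \<in> M. \<bar>H z\<bar> > c}"
    proof (intro exI[of _ "(\<bar>H x\<bar> - c)/2"] conjI subsetI)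
      show "(\<bar>H x\<bar> - c)/2 > 0" using x by auto
      fix y assume y: "y \<in> mball x ((\<bar>H x\<bar> - c)/2)"
      hence "x \<in> M" "y \<in> M" "d x y < (\<bar>H x\<bar> - c)/2" by auto
      moreover have "\<bar>H x - H y\<bar> \<le> 2 * d x y" using Hl \<open>x\<in>M\<close> \<open>y\<in>M\<close> by blast
      ultimately show "y \<in> {z \<in> M. \<bar>H z\<bar> > c}" by auto
    qed
  qed auto
  thus ?thesis unfolding mborel_def by (auto intro: sigma_sets.Basic)
qed

lemma kf_step:
  fixes H :: "'c \<Rightarrow> real"
  assumes MS: "Metric_space M d"
    and Hl: "\<forall>z\<in>M. \<forall>a\<in>M. \<bar>H z - H a\<bar> \<le> 2 * d z a"
    and pm: "prob_space \<mu>" and sm: "sets \<mu> = mborel M d"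
    and e0: "e \<ge> 0" and he: "measure \<mu> {z\<in>M. \<bar>H z\<bar> > e} \<le> e"
    and d0: "\<delta> > 0"
    and hn: "\<forall>A\<in>mborel M d. measure \<nu> A \<le> measure \<mu> (open_nbhd M d \<delta> A) + \<delta>"
  shows "measure \<nu> {z\<in>M. \<bar>H z\<bar> > e + 2*\<delta>} \<le> e + 2*\<delta>"
proof -
  interpret prob_space \<mu> by (rule pm)
  let ?A = "{z\<in>M. \<bar>H z\<bar> > e + 2*\<delta>}"
  have Am: "?A \<in> mborel M d" by (rule superlevel_mborel[OF MS Hl])
  have sub: "open_nbhd M d \<delta> ?A \<subseteq> {z\<in>M. \<bar>H z\<bar> > e}"
  proof
    fix z assume "z \<in> open_nbhd M d \<delta> ?A"
    then obtain a where a: "z \<in> M" "a \<in> M" "\<bar>H a\<bar> > e + 2*\<delta>" "d z a < \<delta>"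
      unfolding open_nbhd_def by auto
    have "\<bar>H z - H a\<bar> \<le> 2 * d z a" using Hl a by blast
    thus "z \<in> {z\<in>M. \<bar>H z\<bar> > e}" using a by auto
  qed
  have "measure \<mu> (open_nbhd M d \<delta> ?A) \<le> measure \<mu> {z\<in>M. \<bar>H z\<bar> > e}"
    by (rule finite_measure_mono[OF sub]) (simp add: sm superlevel_mborel[OF MS Hl])
  thus ?thesis using hn Am he d0 by fastforce
qed

lemma kf_shift:
  fixes F G :: "'c \<Rightarrow> real"
  assumes MS: "Metric_space M d"
    and Hl: "\<forall>z\<in>M. \<forall>a\<in>M. \<bar>(F z - G z) - (F a - G a)\<bar> \<le> 2 * d z a"
    and pm: "prob_space \<mu>" and sm: "sets \<mu> = mborel M d" and spm: "space \<mu> = M"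
    and pn: "prob_space \<nu>" and sn: "sets \<nu> = mborel M d" and spn: "space \<nu> = M"
  shows "dKF \<nu> F G \<le> dKF \<mu> F G + 2 * prohorov M d \<mu> \<nu>"
proof -
  define H where "H = (\<lambda>z. F z - G z)"
  define S where "S = (\<lambda>m. {e. e \<ge> 0 \<and> measure m {z\<in>M. \<bar>H z\<bar> > e} \<le> (e::real)})"
  define P where "P = {e. e > 0 \<and> (\<forall>A \<in> mborel M d.
       measure \<mu> A \<le> measure \<nu> (open_nbhd M d e A) + e \<and>
       measure \<nu> A \<le> measure \<mu> (open_nbhd M d e A) + e)}"
  have dk: "dKF m F G = Inf (S m)" if "space m = M" for m
    unfolding dKF_def S_def H_def using that by simp
  have pr: "prohorov M d \<mu> \<nu> = Inf P" unfolding prohorov_def P_def by simp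
  have HL: "\<forall>z\<in>M. \<forall>a\<in>M. \<bar>H z - H a\<bar> \<le> 2 * d z a" using Hl unfolding H_def by simp
  have S1: "1 \<in> S m" if "prob_space m" for m
    using prob_space.prob_le_1[OF that] unfolding S_def by auto
  have Sb: "bdd_below (S m)" for m unfolding S_def by (auto intro: bdd_belowI[of _ 0])
  have P1: "1 \<in> P" unfolding P_def
    using prob_space.prob_le_1[OF pm] prob_space.prob_le_1[OF pn]
    by (auto intro: add_increasing measure_nonneg)
  have Pb: "bdd_below P" unfolding P_def by (auto intro: bdd_belowI[of _ 0])
  have step: "dKF \<nu> F G \<le> e + 2*\<delta>" if e: "e \<in> S \<mu>" and dl: "\<delta> \<in> P" for e \<delta>
  proof -
    have "measure \<nu> {z\<in>M. \<bar>H z\<bar> > e + 2*\<delta>} \<le> e + 2*\<delta>"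
      apply (rule kf_step[OF MS HL pm sm])
      using e dl unfolding S_def P_def by auto
    hence "e + 2*\<delta> \<in> S \<nu>" using e dl unfolding S_def P_def by auto
    thus ?thesis unfolding dk[OF spn] by (rule cInf_lower[OF _ Sb])
  qed
  have "dKF \<nu> F G - 2*\<delta> \<le> dKF \<mu> F G" if dl: "\<delta> \<in> P" for \<delta>
    unfolding dk[OF spm]
  proof (rule cInf_greatest)
    show "S \<mu> \<noteq> {}" using S1[OF pm] by auto
    fix x assume "x \<in> S \<mu>"
    from step[OF this dl] show "dKF \<nu> F G - 2*\<delta> \<le> x" by simp
  qed
  hence "(dKF \<nu> F G - dKF \<mu> F G)/2 \<le> Inf P"
    by (intro cInf_greatest) (use P1 in \<open>auto simp: field_simps\<close>)
  thus ?thesis using pr by simp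
qed

lemma haus_shift:
  fixes dd dd' :: "'b \<Rightarrow> 'b \<Rightarrow> real"
  assumes A: "A \<noteq> {}" and B: "B \<noteq> {}"
    and b0: "\<forall>a\<in>A. \<forall>b\<in>B. 0 \<le> dd a b \<and> dd a b \<le> 1 \<and> 0 \<le> dd' a b \<and> dd' a b \<le> 1"
    and sh: "\<forall>a\<in>A. \<forall>b\<in>B. dd' a b \<le> dd a b + c"
  shows "hausdorff_dist dd' A B \<le> hausdorff_dist dd A B + c"
proof -
  have i1: "(INF b\<in>B. dd' a b) \<le> (INF b\<in>B. dd a b) + c" if a: "a \<in> A" for a
  proof -
    have "(INF b\<in>B. dd' a b) - c \<le> (INF b\<in>B. dd a b)"
    proof (rule cINF_greatest[OF B])
      fix b assume b: "b \<in> B"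
      have "(INF b\<in>B. dd' a b) \<le> dd' a b"
        by (rule cINF_lower[OF _ b]) (use a b0 in \<open>auto intro!: bdd_belowI2[of _ 0]\<close>)
      thus "(INF b\<in>B. dd' a b) - c \<le> dd a b" using sh a b by force
    qed
    thus ?thesis by simp
  qed
  have i2: "(INF a\<in>A. dd' a b) \<le> (INF a\<in>A. dd a b) + c" if b: "b \<in> B" for b
  proof -
    have "(INF a\<in>A. dd' a b) - c \<le> (INF a\<in>A. dd a b)"
    proof (rule cINF_greatest[OF A])
      fix a assume a: "a \<in> A"
      have "(INF a\<in>A. dd' a b) \<le> dd' a b"
        by (rule cINF_lower[OF _ a]) (use b b0 in \<open>auto intro!: bdd_belowI2[of _ 0]\<close>)
      thus "(INF a\<in>A. dd' a b) - c \<le> dd a b" using sh a b by force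
    qed
    thus ?thesis by simp
  qed
  obtain b1 where b1: "b1 \<in> B" using B by auto
  obtain a1 where a1: "a1 \<in> A" using A by auto
  have ub1: "(INF b\<in>B. dd a b) \<le> 1" if "a \<in> A" for a
  proof -
    have "(INF b\<in>B. dd a b) \<le> dd a b1"
      by (rule cINF_lower[OF _ b1]) (use that b0 in \<open>auto intro!: bdd_belowI2[of _ 0]\<close>)
    thus ?thesis using b0 that b1 by force
  qed
  have ub2: "(INF a\<in>A. dd a b) \<le> 1" if "b \<in> B" for b
  proof -
    have "(INF a\<in>A. dd a b) \<le> dd a1 b"
      by (rule cINF_lower[OF _ a1]) (use that b0 in \<open>auto intro!: bdd_belowI2[of _ 0]\<close>)
    thus ?thesis using b0 that a1 by force
  qed
  have s1: "(SUP a\<in>A. INF b\<in>B. dd' a b) \<le> (SUP a\<in>A. INF b\<in>B. dd a b) + c"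
  proof (rule cSUP_least[OF A])
    fix a assume a: "a \<in> A"
    have "(INF b\<in>B. dd a b) \<le> (SUP a\<in>A. INF b\<in>B. dd a b)"
      by (rule cSUP_upper[OF a]) (use ub1 in \<open>auto intro!: bdd_aboveI2\<close>)
    thus "(INF b\<in>B. dd' a b) \<le> (SUP a\<in>A. INF b\<in>B. dd a b) + c" using i1[OF a] by linarith
  qed
  have s2: "(SUP b\<in>B. INF a\<in>A. dd' a b) \<le> (SUP b\<in>B. INF a\<in>A. dd a b) + c"
  proof (rule cSUP_least[OF B])
    fix b assume b: "b \<in> B"
    have "(INF a\<in>A. dd a b) \<le> (SUP b\<in>B. INF a\<in>A. dd a b)"
      by (rule cSUP_upper[OF b]) (use ub2 in \<open>auto intro!: bdd_aboveI2\<close>)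
    thus "(INF a\<in>A. dd' a b) \<le> (SUP b\<in>B. INF a\<in>A. dd a b) + c" using i2[OF b] by linarith
  qed
  show ?thesis unfolding hausdorff_dist_def using s1 s2 by linarith
qed

lemma dKF_bounds:
  assumes "prob_space m"
  shows "0 \<le> dKF m F G \<and> dKF m F G \<le> 1"
proof -
  let ?S = "{e. e \<ge> 0 \<and> measure m {z \<in> space m. \<bar>F z - G z\<bar> > e} \<le> (e::real)}"
  have 1: "1 \<in> ?S" using prob_space.prob_le_1[OF assms] by auto
  have b: "bdd_below ?S" by (auto intro: bdd_belowI[of _ 0])
  have "Inf ?S \<le> 1" by (rule cInf_lower[OF 1 b])
  moreover have "0 \<le> Inf ?S"
  proof (rule cInf_greatest)
    show "?S \<noteq> {}" using 1 by blast
  qed auto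
  ultimately show ?thesis unfolding dKF_def by simp
qed

lemma prohorov_sym: "prohorov M d \<mu> \<nu> = prohorov M d \<nu> \<mu>"
  unfolding prohorov_def by (metis (no_types, lifting) conj_commute)

theorem lemma5p7:
  fixes X :: "'a set" and dX :: "'a \<Rightarrow> 'a \<Rightarrow> real"
    and Y :: "'b set" and dY :: "'b \<Rightarrow> 'b \<Rightarrow> real"
    and dXY :: "('a \<times> 'b) \<Rightarrow> ('a \<times> 'b) \<Rightarrow> real"
    and \<pi> \<pi>' :: "('a \<times> 'b) measure"
  assumes "Metric_space X dX" and "Metric_space Y dY" and "Metric_space (X \<times> Y) dXY"
    and "\<forall>p\<in>X \<times> Y. \<forall>q\<in>X \<times> Y. dX (fst p) (fst q) \<le> dXY p q"
    and "\<forall>p\<in>X \<times> Y. \<forall>q\<in>X \<times> Y. dY (snd p) (snd q) \<le> dXY p q"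
    and "borel_prob_measure (X \<times> Y) dXY \<pi>" and "borel_prob_measure (X \<times> Y) dXY \<pi>'"
  shows "\<bar>dconc \<pi> X dX Y dY - dconc \<pi>' X dX Y dY\<bar> \<le> 2 * prohorov (X \<times> Y) dXY \<pi> \<pi>'"
proof -
  let ?A = "(\<lambda>f. f \<circ> (fst :: 'a \<times> 'b \<Rightarrow> 'a)) ` Lip1 X dX"
  let ?B = "(\<lambda>g. g \<circ> (snd :: 'a \<times> 'b \<Rightarrow> 'b)) ` Lip1 Y dY"
  have p1: "prob_space \<pi>" "sets \<pi> = mborel (X \<times> Y) dXY" "space \<pi> = X \<times> Y"
    using assms(6) unfolding borel_prob_measure_def by auto
  have p2: "prob_space \<pi>'" "sets \<pi>' = mborel (X \<times> Y) dXY" "space \<pi>' = X \<times> Y"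
    using assms(7) unfolding borel_prob_measure_def by auto
  have An: "?A \<noteq> {}" unfolding Lip1_def
    using Metric_space.nonneg[OF assms(1)] by (auto intro!: exI[of _ "\<lambda>_. 0"])
  have Bn: "?B \<noteq> {}" unfolding Lip1_def
    using Metric_space.nonneg[OF assms(2)] by (auto intro!: exI[of _ "\<lambda>_. 0"])
  have lip: "\<forall>z\<in>X \<times> Y. \<forall>a\<in>X \<times> Y. \<bar>(F z - G z) - (F a - G a)\<bar> \<le> 2 * dXY z a"
    if F: "F \<in> ?A" and G: "G \<in> ?B" for F G :: "'a \<times> 'b \<Rightarrow> real"
  proof (intro ballI)
    fix z a assume z: "z \<in> X \<times> Y" and a: "a \<in> X \<times> Y"
    obtain f where f: "f \<in> Lip1 X dX" "F = f \<circ> fst" using F by auto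
    obtain g where g: "g \<in> Lip1 Y dY" "G = g \<circ> snd" using G by auto
    have "\<bar>f (fst z) - f (fst a)\<bar> \<le> dX (fst z) (fst a)" using f z a unfolding Lip1_def by auto
    moreover have "\<bar>g (snd z) - g (snd a)\<bar> \<le> dY (snd z) (snd a)" using g z a unfolding Lip1_def by auto
    moreover have "dX (fst z) (fst a) \<le> dXY z a" "dY (snd z) (snd a) \<le> dXY z a"
      using assms(4,5) z a by auto
    ultimately show "\<bar>(F z - G z) - (F a - G a)\<bar> \<le> 2 * dXY z a" using f g by auto
  qed
  have b0: "\<forall>a\<in>?A. \<forall>b\<in>?B. 0 \<le> dKF m a b \<and> dKF m a b \<le> 1 \<and> 0 \<le> dKF m' a b \<and> dKF m' a b \<le> 1"
    if "prob_space m" "prob_space m'" for m m'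
    using dKF_bounds[OF that(1)] dKF_bounds[OF that(2)] by blast
  have sh: "\<forall>F\<in>?A. \<forall>G\<in>?B. dKF n F G \<le> dKF m F G + 2 * prohorov (X \<times> Y) dXY m n"
    if m: "prob_space m" "sets m = mborel (X \<times> Y) dXY" "space m = X \<times> Y"
    and n: "prob_space n" "sets n = mborel (X \<times> Y) dXY" "space n = X \<times> Y" for m n
  proof (intro ballI)
    fix F G assume "F \<in> ?A" "G \<in> ?B"
    from lip[OF this] show "dKF n F G \<le> dKF m F G + 2 * prohorov (X \<times> Y) dXY m n"
      by (rule kf_shift[OF assms(3) _ m n])
  qed
  have h1: "dconc \<pi>' X dX Y dY \<le> dconc \<pi> X dX Y dY + 2 * prohorov (X \<times> Y) dXY \<pi> \<pi>'"
    unfolding dconc_def by (rule haus_shift[OF An Bn b0[OF p1(1) p2(1)] sh[OF p1 p2]])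
  have h2: "dconc \<pi> X dX Y dY \<le> dconc \<pi>' X dX Y dY + 2 * prohorov (X \<times> Y) dXY \<pi>' \<pi>"
    unfolding dconc_def by (rule haus_shift[OF An Bn b0[OF p2(1) p1(1)] sh[OF p2 p1]])
  show ?thesis using h1 h2 prohorov_sym[of "X \<times> Y" dXY \<pi> \<pi>'] by linarith
qed

end
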